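(* Let $\mathcal H$ be the Hermitian polar space of a non-degenerate $\sigma$-Hermitian form of finite Witt index $n\ge2$ and anisotropic defect $d>0$ (possibly infinite) over a field $\mathbb F$. Let $\{\{p_1,\dots,p_n\},\{p'_1,\dots,p'_n\}\}$ be a frame of $\mathcal H$ and let $F_n$ be the set of the $2^n$ maximal singular subspaces $\langle x_1,\dots,x_n\rangle$ with $x_i\in\{p_i,p'_i\}$ for each $i$. Then $F_n$ generates the dual polar space $\mathcal H_n$.
   Context: Setting: $h$ non-degenerate $\sigma$-Hermitian ($\sigma\ne\mathrm{id}$ involutory) on $V=V_1\oplus\cdots\oplus V_n\oplus V_0$ with $V_i$ pairwise orthogonal hyperbolic planes and $V_0$ anisotropic orthogonal to them, $d=\dim V_0$. Points of $\mathcal H$: totally isotropic 1-spaces; $x\perp y$ means $h(x,y)=0$. $S_k(\mathcal H)$: totally isotropic subspaces of dimension $k$. A frame is a pair of bases $\{p_1,\dots,p_n\}$, $\{p'_1,\dots,p'_n\}$ of two disjoint maximal totally isotropic subspaces such that $p_i\perp p'_j$ iff $i\ne j$. The dual polar space $\mathcal H_n$ has points $S_n(\mathcal H)$ and lines $\{Z\in S_n(\mathcal H): Z\supset X\}$ for $X\in S_{n-1}(\mathcal H)$. A set generates a point-line geometry if the smallest subspace (set closed under taking lines meeting it in $\ge2$ points) containing it is the whole point set. *)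

theory Defs
  imports "HOL.Vector_Spaces"
begin

definition inv_field_aut :: "('k::field \<Rightarrow> 'k) \<Rightarrow> bool" where
  "inv_field_aut \<sigma> \<longleftrightarrow>
     (\<forall>a b. \<sigma> (a + b) = \<sigma> a + \<sigma> b) \<and> (\<forall>a b. \<sigma> (a * b) = \<sigma> a * \<sigma> b) \<and>
     (\<forall>a. \<sigma> (\<sigma> a) = a) \<and> \<sigma> \<noteq> id"

definition sigma_hermitian ::
  "('k::field \<Rightarrow> 'v::ab_group_add \<Rightarrow> 'v) \<Rightarrow> ('k \<Rightarrow> 'k) \<Rightarrow> ('v \<Rightarrow> 'v \<Rightarrow> 'k) \<Rightarrow> bool" where
  "sigma_hermitian scale \<sigma> h \<longleftrightarrow>
     (\<forall>x y z. h (x + y) z = h x z + h y z) \<and>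
     (\<forall>a x y. h (scale a x) y = a * h x y) \<and>
     (\<forall>x y. h y x = \<sigma> (h x y))"

definition nondegenerate :: "('v::zero \<Rightarrow> 'v \<Rightarrow> 'k::field) \<Rightarrow> bool" where
  "nondegenerate h \<longleftrightarrow> (\<forall>x. (\<forall>y. h x y = 0) \<longrightarrow> x = 0)"

definition tot_iso :: "('v \<Rightarrow> 'v \<Rightarrow> 'k::field) \<Rightarrow> 'v set \<Rightarrow> bool" where
  "tot_iso h W \<longleftrightarrow> (\<forall>x\<in>W. \<forall>y\<in>W. h x y = 0)"

definition Sk ::
  "('k::field \<Rightarrow> 'v::ab_group_add \<Rightarrow> 'v) \<Rightarrow> ('v \<Rightarrow> 'v \<Rightarrow> 'k) \<Rightarrow> nat \<Rightarrow> 'v set set" where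
  "Sk scale h k = {W. module.subspace scale W \<and> tot_iso h W \<and>
      (\<exists>B. finite B \<and> card B = k \<and> module.independent scale B \<and> module.span scale B = W)}"

definition witt_index ::
  "('k::field \<Rightarrow> 'v::ab_group_add \<Rightarrow> 'v) \<Rightarrow> ('v \<Rightarrow> 'v \<Rightarrow> 'k) \<Rightarrow> nat \<Rightarrow> bool" where
  "witt_index scale h n \<longleftrightarrow> Sk scale h n \<noteq> {} \<and>
     (\<forall>W. module.subspace scale W \<and> tot_iso h W \<longrightarrow>
        (\<exists>B. finite B \<and> card B \<le> n \<and> module.independent scale B \<and> module.span scale B = W))"

text \<open>Positive anisotropic defect: V = V_1 + ... + V_n + V_0 with hyperbolic planes
  V_i = <e_i, f_i> and V_0 (their orthogonal complement) anisotropic and nonzero.\<close>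
definition positive_defect ::
  "('k::field \<Rightarrow> 'v::ab_group_add \<Rightarrow> 'v) \<Rightarrow> ('v \<Rightarrow> 'v \<Rightarrow> 'k) \<Rightarrow> nat \<Rightarrow> bool" where
  "positive_defect scale h n \<longleftrightarrow>
     (\<exists>e f :: nat \<Rightarrow> 'v.
        (\<forall>i<n. \<forall>j<n. h (e i) (e j) = 0 \<and> h (f i) (f j) = 0 \<and>
                      h (e i) (f j) = (if i = j then 1 else 0)) \<and>
        (let V0 = {v. \<forall>i<n. h v (e i) = 0 \<and> h v (f i) = 0} in
           (\<forall>v\<in>V0. h v v = 0 \<longrightarrow> v = 0) \<and> V0 \<noteq> {0}))"

definition is_frame ::
  "('k::field \<Rightarrow> 'v::ab_group_add \<Rightarrow> 'v) \<Rightarrow> ('v \<Rightarrow> 'v \<Rightarrow> 'k) \<Rightarrow> nat \<Rightarrow>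
   (nat \<Rightarrow> 'v) \<Rightarrow> (nat \<Rightarrow> 'v) \<Rightarrow> bool" where
  "is_frame scale h n p p' \<longleftrightarrow>
     (let P = module.span scale (p ` {..<n}); P' = module.span scale (p' ` {..<n}) in
        card (p ` {..<n}) = n \<and> module.independent scale (p ` {..<n}) \<and>
        card (p' ` {..<n}) = n \<and> module.independent scale (p' ` {..<n}) \<and>
        tot_iso h P \<and> tot_iso h P' \<and>
        (\<forall>W. module.subspace scale W \<and> tot_iso h W \<and> P \<subseteq> W \<longrightarrow> W = P) \<and>
        (\<forall>W. module.subspace scale W \<and> tot_iso h W \<and> P' \<subseteq> W \<longrightarrow> W = P') \<and>
        P \<inter> P' = {0} \<and>
        (\<forall>i<n. \<forall>j<n. h (p i) (p' j) = 0 \<longleftrightarrow> i \<noteq> j))"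

definition frame_subspaces ::
  "('k::field \<Rightarrow> 'v::ab_group_add \<Rightarrow> 'v) \<Rightarrow> nat \<Rightarrow> (nat \<Rightarrow> 'v) \<Rightarrow> (nat \<Rightarrow> 'v) \<Rightarrow> 'v set set" where
  "frame_subspaces scale n p p' =
     {module.span scale ((\<lambda>i. if c i then p i else p' i) ` {..<n}) | c :: nat \<Rightarrow> bool. True}"

definition dual_points ::
  "('k::field \<Rightarrow> 'v::ab_group_add \<Rightarrow> 'v) \<Rightarrow> ('v \<Rightarrow> 'v \<Rightarrow> 'k) \<Rightarrow> nat \<Rightarrow> 'v set set" where
  "dual_points scale h n = Sk scale h n"

definition dual_lines ::
  "('k::field \<Rightarrow> 'v::ab_group_add \<Rightarrow> 'v) \<Rightarrow> ('v \<Rightarrow> 'v \<Rightarrow> 'k) \<Rightarrow> nat \<Rightarrow> 'v set set set" where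
  "dual_lines scale h n = {{Z \<in> Sk scale h n. X \<subseteq> Z} | X. X \<in> Sk scale h (n - 1)}"

definition geom_subspace :: "'p set \<Rightarrow> 'p set set \<Rightarrow> 'p set \<Rightarrow> bool" where
  "geom_subspace P L S \<longleftrightarrow> S \<subseteq> P \<and>
     (\<forall>l\<in>L. (\<exists>a b. a \<noteq> b \<and> a \<in> l \<inter> S \<and> b \<in> l \<inter> S) \<longrightarrow> l \<subseteq> S)"

definition generates :: "'p set \<Rightarrow> 'p set set \<Rightarrow> 'p set \<Rightarrow> bool" where
  "generates P L G \<longleftrightarrow> \<Inter> {S. geom_subspace P L S \<and> G \<subseteq> S} = P"

end

theory Submission
  imports Defs
begin


locale herm = vector_space scale
  for scale :: "'k::field \<Rightarrow> 'v::ab_group_add \<Rightarrow> 'v" +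
  fixes \<sigma> :: "'k \<Rightarrow> 'k" and h :: "'v \<Rightarrow> 'v \<Rightarrow> 'k"
  assumes aut: "inv_field_aut \<sigma>"
    and her: "sigma_hermitian scale \<sigma> h"
begin

lemma sig_add[simp]: "\<sigma> (a + b) = \<sigma> a + \<sigma> b" using aut unfolding inv_field_aut_def by blast
lemma sig_mult[simp]: "\<sigma> (a * b) = \<sigma> a * \<sigma> b" using aut unfolding inv_field_aut_def by blast
lemma sig_sig[simp]: "\<sigma> (\<sigma> a) = a" using aut unfolding inv_field_aut_def by blast
lemma sig_ne_id: "\<exists>a. \<sigma> a \<noteq> a" using aut unfolding inv_field_aut_def by (auto simp: fun_eq_iff)
lemma sig0[simp]: "\<sigma> 0 = 0"
  using sig_add[of 0 0] by (metis add.right_neutral add_cancel_left_right)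
lemma sig_eq0[simp]: "\<sigma> a = 0 \<longleftrightarrow> a = 0"
  by (metis sig0 sig_sig)
lemma sig1[simp]: "\<sigma> 1 = 1"
proof -
  have "\<sigma> 1 = \<sigma> 1 * \<sigma> 1" using sig_mult[of 1 1] by simp
  moreover have "\<sigma> 1 \<noteq> 0" by simp
  ultimately show ?thesis by (metis mult_cancel_left2)
qed
lemma sig_minus[simp]: "\<sigma> (- a) = - \<sigma> a"
  using sig_add[of a "-a"] by (simp add: eq_neg_iff_add_eq_0 add.commute)
lemma sig_diff[simp]: "\<sigma> (a - b) = \<sigma> a - \<sigma> b"
  using sig_add[of a "-b"] by simp
lemma sig_inverse[simp]: "\<sigma> (inverse a) = inverse (\<sigma> a)"
proof (cases "a = 0")
  case False
  then have "\<sigma> a * \<sigma> (inverse a) = 1" using sig_mult[of a "inverse a"] by simp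
  then show ?thesis by (metis inverse_unique)
qed simp
lemma sig_divide[simp]: "\<sigma> (a / b) = \<sigma> a / \<sigma> b"
  by (simp add: divide_inverse)

lemma h_add1[simp]: "h (x + y) z = h x z + h y z" using her unfolding sigma_hermitian_def by blast
lemma h_scale1[simp]: "h (scale a x) y = a * h x y" using her unfolding sigma_hermitian_def by blast
lemma h_sym: "h y x = \<sigma> (h x y)" using her unfolding sigma_hermitian_def by blast
lemma h_add2[simp]: "h x (y + z) = h x y + h x z"
  by (metis h_sym h_add1 sig_add)
lemma h_scale2[simp]: "h x (scale a y) = \<sigma> a * h x y"
  by (metis h_sym h_scale1 sig_mult sig_sig)
lemma h_01[simp]: "h 0 y = 0" using h_add1[of 0 0 y] by (metis add.right_neutral add_cancel_left_right)
lemma h_02[simp]: "h x 0 = 0" using h_add2[of x 0 0] by (metis add.right_neutral add_cancel_left_right)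
lemma h_neg1[simp]: "h (- x) y = - h x y" using h_add1[of x "-x" y] by (simp add: eq_neg_iff_add_eq_0 add.commute)
lemma h_neg2[simp]: "h x (- y) = - h x y" using h_add2[of x y "-y"] by (simp add: eq_neg_iff_add_eq_0 add.commute)
lemma h_diff1[simp]: "h (x - y) z = h x z - h y z" using h_add1[of x "-y" z] by simp
lemma h_diff2[simp]: "h x (y - z) = h x y - h x z" using h_add2[of x y "-z"] by simp
lemma h_sym0: "h x y = 0 \<longleftrightarrow> h y x = 0" by (metis h_sym sig_eq0)
lemma h_self_fix: "\<sigma> (h x x) = h x x" by (metis h_sym)

lemma orth_span: assumes "\<forall>y\<in>B. h y g = 0" "y \<in> span B" shows "h y g = 0"
  using assms(2) proof (induction rule: span_induct_alt)
  case base then show ?case by simp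
next
  case (step c x y) then show ?case using assms(1) by simp
qed

lemma orth_span2: assumes "\<forall>y\<in>B. \<forall>z\<in>C. h y z = 0" "y \<in> span B" "z \<in> span C" shows "h y z = 0"
proof -
  have "\<forall>z'\<in>C. h y z' = 0" using assms orth_span by blast
  then have "\<forall>z'\<in>C. h z' y = 0" using h_sym0 by blast
  then have "h z y = 0" using orth_span assms(3) by blast
  then show ?thesis using h_sym0 by blast
qed

lemma dual_indep: assumes "\<forall>t\<in>T. \<exists>g. h t g \<noteq> 0 \<and> (\<forall>t'\<in>T. t' \<noteq> t \<longrightarrow> h t' g = 0)"
  shows "independent T"
proof
  assume "dependent T"
  then obtain a where a: "a \<in> T" "a \<in> span (T - {a})" unfolding dependent_def by blast
  obtain g where g: "h a g \<noteq> 0" "\<forall>t'\<in>T. t' \<noteq> a \<longrightarrow> h t' g = 0" using assms a by blast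
  have "h a g = 0" using orth_span[of "T - {a}" g a] g a by blast
  then show False using g by simp
qed

lemma tot_span: assumes "\<forall>x\<in>A. \<forall>y\<in>A. h x y = 0" shows "tot_iso h (span A)"
  unfolding tot_iso_def using orth_span2[OF assms] by blast

lemma ker1: assumes "finite T" "independent T"
  shows "\<exists>B. B \<subseteq> span T \<and> (\<forall>y\<in>B. h y g = 0) \<and> independent B \<and> finite B \<and> card T \<le> card B + 1"
proof (cases "\<forall>t\<in>T. h t g = 0")
  case True
  show ?thesis using assms True span_superset[of T] by (intro exI[of _ T]) simp
next
  case False
  then obtain t0 where t0: "t0 \<in> T" "h t0 g \<noteq> 0" by blast
  define K where "K = {y \<in> span T. h y g = 0}"
  obtain B where B: "B \<subseteq> K" "independent B" "K \<subseteq> span B"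
    by (rule maximal_independent_subset_extend[of "{}" K]) (auto simp: independent_empty)
  have BT: "B \<subseteq> span T" using B(1) K_def by blast
  have Bg: "\<forall>y\<in>B. h y g = 0" using B(1) K_def by blast
  have fB: "finite B" using independent_span_bound[OF assms(1) B(2) BT] by blast
  have "T \<subseteq> span (insert t0 B)"
  proof
    fix t assume t: "t \<in> T"
    have "t - scale (h t g / h t0 g) t0 \<in> span T"
      using t t0 by (meson span_base span_diff span_scale)
    moreover have "h (t - scale (h t g / h t0 g) t0) g = 0" using t0 by simp
    ultimately have "t - scale (h t g / h t0 g) t0 \<in> K" unfolding K_def by blast
    then show "t \<in> span (insert t0 B)" using B(3) span_breakdown_eq by blast
  qed
  then have "card T \<le> card (insert t0 B)" using independent_span_bound[OF _ assms(2)] fB by blast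
  also have "\<dots> \<le> card B + 1" using fB by (simp add: card_insert_if)
  finally show ?thesis using B(2) BT fB Bg by blast
qed

lemma kerC: assumes "finite C"
  shows "finite T \<Longrightarrow> independent T \<Longrightarrow> \<exists>B. B \<subseteq> span T \<and> (\<forall>y\<in>B. \<forall>c\<in>C. h y c = 0) \<and> independent B \<and> finite B \<and> card T \<le> card B + card C"
  using assms(1) proof (induction C arbitrary: T rule: finite_induct)
  case empty
  show ?case using empty span_superset[of T] by (intro exI[of _ T]) simp
next
  case (insert g C)
  obtain B1 where B1: "B1 \<subseteq> span T" "\<forall>y\<in>B1. \<forall>c\<in>C. h y c = 0" "independent B1" "finite B1" "card T \<le> card B1 + card C"
    using insert.IH[OF insert.prems] by auto
  obtain B2 where B2: "B2 \<subseteq> span B1" "\<forall>y\<in>B2. h y g = 0" "independent B2" "finite B2" "card B1 \<le> card B2 + 1"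
    using ker1[OF B1(4,3)] by blast
  have "span B1 \<subseteq> span T" using B1(1) by (metis span_mono span_span)
  then have 1: "B2 \<subseteq> span T" using B2(1) by blast
  have 2: "\<forall>y\<in>B2. \<forall>c\<in>insert g C. h y c = 0" using B2(1,2) B1(2) orth_span by blast
  have 3: "card T \<le> card B2 + card (insert g C)" using B2(5) B1(5) insert(1,2) by simp
  show ?case using 1 2 3 B2(3,4) by blast
qed

lemma exists_nontrace: "\<exists>s. s + \<sigma> s \<noteq> 0"
proof (rule ccontr)
  assume "\<not> ?thesis"
  then have A: "\<And>s. s + \<sigma> s = 0" by blast
  obtain a where a: "\<sigma> a \<noteq> a" using sig_ne_id by blast
  have 2: "(1::'k) + 1 = 0" using A[of 1] by simp
  have "a + a = (1 + 1) * a" by (simp add: distrib_right)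
  then have aa: "a + a = 0" using 2 by simp
  have "\<sigma> a = - a" using A[of a] by (simp add: eq_neg_iff_add_eq_0 add.commute)
  also have "\<dots> = a" using aa by (simp add: eq_neg_iff_add_eq_0)
  finally show False using a by simp
qed

lemma trace_surj: assumes "\<sigma> w = w" shows "\<exists>s. s + \<sigma> s = w"
proof -
  obtain t where t: "t + \<sigma> t \<noteq> 0" using exists_nontrace by blast
  define T where "T = t + \<sigma> t"
  have sT: "\<sigma> T = T" unfolding T_def by (simp add: add.commute)
  define s where "s = t * (w / T)"
  have "\<sigma> s = \<sigma> t * (w / T)" unfolding s_def using sT assms by simp
  then have "s + \<sigma> s = t * (w / T) + \<sigma> t * (w / T)" unfolding s_def by simp
  also have "\<dots> = (t + \<sigma> t) * (w / T)" by (rule distrib_right[symmetric])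
  finally have "s + \<sigma> s = (t + \<sigma> t) * (w / T)" .
  then have "s + \<sigma> s = T * (w / T)" unfolding T_def .
  then show ?thesis using t T_def by auto
qed

lemma norm1: "\<exists>\<rho>. \<rho> * \<sigma> \<rho> = 1 \<and> \<rho> \<noteq> 1"
proof -
  obtain a where a: "\<sigma> a \<noteq> a" using sig_ne_id by blast
  then have a0: "a \<noteq> 0" by auto
  define \<rho> where "\<rho> = \<sigma> a / a"
  have "\<rho> * \<sigma> \<rho> = 1" unfolding \<rho>_def using a0 by simp
  moreover have "\<rho> \<noteq> 1" unfolding \<rho>_def using a a0 by (simp add: divide_eq_1_iff)
  ultimately show ?thesis by blast
qed

lemma polar: assumes "h x x = 0" "h y y = 0" "\<And>c. h (x + scale c y) (x + scale c y) = 0"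
  shows "h x y = 0"
proof -
  define t where "t = h x y"
  have ht: "h y x = \<sigma> t" unfolding t_def by (rule h_sym)
  have e: "\<And>c. \<sigma> c * t + c * \<sigma> t = 0"
  proof -
    fix c have "h (x + scale c y) (x + scale c y) = 0" by (rule assms(3))
    then show "\<sigma> c * t + c * \<sigma> t = 0" using assms(1,2) ht by (simp add: t_def add.commute)
  qed
  have e1: "t + \<sigma> t = 0" using e[of 1] by simp
  obtain a where a: "\<sigma> a \<noteq> a" using sig_ne_id by blast
  have "\<sigma> a * t + a * \<sigma> t = 0" by (rule e)
  moreover have "\<sigma> t = - t" using e1 by (simp add: eq_neg_iff_add_eq_0 add.commute)
  ultimately have "(\<sigma> a - a) * t = 0" by (simp add: algebra_simps)
  then show ?thesis using a unfolding t_def by simp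
qed

end


context herm begin

lemma dual_family:
  assumes "\<forall>i\<in>I. \<forall>j\<in>I. (h (g i) (g' j) = 0 \<longleftrightarrow> i \<noteq> j)"
  shows "independent (g ` I) \<and> inj_on g I"
proof
  show inj: "inj_on g I"
  proof (rule inj_onI)
    fix i j assume "i \<in> I" "j \<in> I" "g i = g j"
    then show "i = j" using assms by metis
  qed
  show "independent (g ` I)"
  proof (rule dual_indep, safe)
    fix i assume i: "i \<in> I"
    show "\<exists>ga. h (g i) ga \<noteq> 0 \<and> (\<forall>t'\<in>g ` I. t' \<noteq> g i \<longrightarrow> h t' ga = 0)"
      using i assms by (intro exI[of _ "g' i"]) blast
  qed
qed

lemma mkSk: assumes "finite B" "independent B" "card B = k" "\<forall>x\<in>B. \<forall>y\<in>B. h x y = 0"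
  shows "span B \<in> Sk scale h k"
  unfolding Sk_def using assms tot_span by blast

lemma Sk_D: assumes "M \<in> Sk scale h k"
  obtains B where "finite B" "independent B" "card B = k" "span B = M" "subspace M" "tot_iso h M"
  using assms unfolding Sk_def by blast

lemma not_in_span_pair: assumes "\<forall>y\<in>B. h y g = 0" "h a g \<noteq> 0" shows "a \<notin> span B"
  using orth_span[OF assms(1)] assms(2) by blast

end

locale herm2 = herm +
  fixes n :: nat
  assumes witt: "witt_index scale h n" and n2: "n \<ge> 2" and pd: "positive_defect scale h n"
begin

lemma bound: assumes "independent T" "\<forall>x\<in>T. \<forall>y\<in>T. h x y = 0"
  shows "finite T \<and> card T \<le> n"
proof -
  have "subspace (span T)" by simp
  moreover have "tot_iso h (span T)" using tot_span assms(2) by blast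
  ultimately obtain B where B: "finite B" "card B \<le> n" "span B = span T"
    using witt unfolding witt_index_def by blast
  have "T \<subseteq> span B" using B(3) span_superset by blast
  then show ?thesis using independent_span_bound[OF B(1) assms(1)] B(2) by auto
qed

lemma big: "\<exists>E. finite E \<and> independent E \<and> card E = 2*n+1"
proof -
  obtain e f :: "nat \<Rightarrow> 'b" where ef: "\<forall>i<n. \<forall>j<n. h (e i) (e j) = 0 \<and> h (f i) (f j) = 0 \<and>
                      h (e i) (f j) = (if i = j then 1 else 0)"
    and V0: "\<forall>v\<in>{v. \<forall>i<n. h v (e i) = 0 \<and> h v (f i) = 0}. h v v = 0 \<longrightarrow> v = 0"
            "{v. \<forall>i<n. h v (e i) = 0 \<and> h v (f i) = 0} \<noteq> {0}"
    using pd unfolding positive_defect_def Let_def by blast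
  have "\<exists>v. v \<noteq> 0 \<and> (\<forall>i<n. h v (e i) = 0 \<and> h v (f i) = 0)"
  proof (rule ccontr)
    assume "\<not> ?thesis"
    then have "{v. \<forall>i<n. h v (e i) = 0 \<and> h v (f i) = 0} = {0}" by auto
    then show False using V0(2) by blast
  qed
  then obtain v where v: "v \<noteq> 0" "\<forall>i<n. h v (e i) = 0 \<and> h v (f i) = 0" by blast
  have vv: "h v v \<noteq> 0" using V0(1) v by blast
  have fe: "\<forall>i<n. \<forall>j<n. h (f i) (e j) = (if i = j then 1 else 0)"
    using ef by (metis h_sym sig0 sig1)
  have ve: "\<forall>i<n. h (e i) v = 0 \<and> h (f i) v = 0" using v(2) h_sym0 by blast
  define g where "g i = (if i < n then e i else if i < 2*n then f (i - n) else v)" for i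
  define g' where "g' i = (if i < n then f i else if i < 2*n then e (i - n) else v)" for i
  have H: "\<forall>i\<in>{..<2*n+1}. \<forall>j\<in>{..<2*n+1}. (h (g i) (g' j) = 0 \<longleftrightarrow> i \<noteq> j)"
  proof (intro ballI)
    fix i j assume i: "i \<in> {..<2*n+1}" and j: "j \<in> {..<2*n+1}"
    show "(h (g i) (g' j) = 0 \<longleftrightarrow> i \<noteq> j)"
      unfolding g_def g'_def using i j ef fe ve v(2) vv
      by (cases "i < n"; cases "j < n"; cases "i < 2*n"; cases "j < 2*n") auto
  qed
  have "independent (g ` {..<2*n+1}) \<and> inj_on g {..<2*n+1}" by (rule dual_family[OF H])
  then show ?thesis using card_image[of g "{..<2*n+1}"] by (intro exI[of _ "g ` {..<2*n+1}"]) simp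
qed

end

locale herm3 = herm2 +
  fixes S
  assumes Ssub: "geom_subspace (Sk scale h n) (dual_lines scale h n) S"
begin

definition FF where
  "FF Y \<longleftrightarrow> (\<forall>M\<in>Sk scale h n. Y \<subseteq> M \<longrightarrow> M \<in> S)"

lemma line_lemma: assumes "X \<in> Sk scale h (n-1)" "P1 \<in> Sk scale h n" "P2 \<in> Sk scale h n"
  "P1 \<noteq> P2" "X \<subseteq> P1" "X \<subseteq> P2" "P1 \<in> S" "P2 \<in> S"
  shows "FF X"
proof -
  define l where "l = {Z \<in> Sk scale h n. X \<subseteq> Z}"
  have "l \<in> dual_lines scale h n" unfolding l_def dual_lines_def using assms(1) by blast
  moreover have "P1 \<in> l \<inter> S" "P2 \<in> l \<inter> S" using assms unfolding l_def by auto
  ultimately have "l \<subseteq> S" using Ssub assms(4) unfolding geom_subspace_def by blast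
  then show ?thesis unfolding FF_def l_def by blast
qed

lemma FF_mono: "FF Y \<Longrightarrow> Y \<subseteq> Y' \<Longrightarrow> FF Y'"
  unfolding FF_def by blast


lemma Lline:
  assumes B: "finite B" "independent B" "card B = n - 1" "\<forall>x\<in>B. \<forall>y\<in>B. h x y = 0"
    and ab: "h a a = 0" "h b b = 0" "h a b \<noteq> 0" "\<forall>y\<in>B. h y a = 0 \<and> h y b = 0"
    and Y: "Y \<subseteq> span B" and Fa: "FF (span (insert a Y))" and Fb: "FF (span (insert b Y))"
  shows "FF (span B)"
proof -
  have ba: "h b a \<noteq> 0" using ab(3) h_sym0 by blast
  have anB: "a \<notin> span B" using not_in_span_pair[of B b a] ab by blast
  have bnB: "b \<notin> span B" using not_in_span_pair[of B a b] ab ba by blast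
  have PS: "span (insert u B) \<in> Sk scale h n \<and> span (insert u B) \<in> S"
    if u: "h u u = 0" "\<forall>y\<in>B. h y u = 0" "u \<notin> span B" "FF (span (insert u Y))" for u
  proof -
    have ind: "independent (insert u B)" using B(2) u(3) by (simp add: independent_insertI)
    have uB: "u \<notin> B" using u(3) span_base by blast
    have card: "card (insert u B) = n" using B(1,3) uB n2 by simp
    have tot: "\<forall>x\<in>insert u B. \<forall>y\<in>insert u B. h x y = 0" using B(4) u(1,2) h_sym0 by blast
    have Sk: "span (insert u B) \<in> Sk scale h n" using mkSk[OF _ ind card tot] B(1) by simp
    have "insert u Y \<subseteq> span (insert u B)" using Y span_mono[of B "insert u B"] span_base[of u "insert u B"] by blast
    then have "span (insert u Y) \<subseteq> span (insert u B)" by (metis span_mono span_span)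
    then show ?thesis using Sk u(4) unfolding FF_def by blast
  qed
  have Pa: "span (insert a B) \<in> Sk scale h n \<and> span (insert a B) \<in> S"
    using PS[OF ab(1) _ anB Fa] ab(4) by blast
  have Pb: "span (insert b B) \<in> Sk scale h n \<and> span (insert b B) \<in> S"
    using PS[OF ab(2) _ bnB Fb] ab(4) by blast
  have ne: "span (insert a B) \<noteq> span (insert b B)"
  proof
    assume "span (insert a B) = span (insert b B)"
    then have "b \<in> span (insert a B)" using span_base[of b "insert b B"] by simp
    then obtain k where k: "b - scale k a \<in> span B" using span_breakdown_eq by blast
    have "h (b - scale k a) b = 0" using orth_span[of B b] ab(4) k by blast
    then have "k * h a b = 0" using ab(2) by simp
    then have "k = 0" using ab(3) by simp
    then have "b \<in> span B" using k by simp
    then show False using bnB by blast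
  qed
  have X: "span B \<in> Sk scale h (n - 1)" using mkSk[OF B] .
  show ?thesis
    by (rule line_lemma[OF X conjunct1[OF Pa] conjunct1[OF Pb] ne _ _ conjunct2[OF Pa] conjunct2[OF Pb]])
       (use span_mono[of B "insert a B"] span_mono[of B "insert b B"] in auto)
qed

end


context herm begin

lemma zcalc:
  assumes "h c c = 0" "h c' c' = 0" "h c c' = \<delta>" "\<delta> \<noteq> 0"
    "h w c = 0" "h w c' = 0" "h w w = \<omega>" "s + \<sigma> s = \<omega>"
    "r * \<sigma> r = 1" "\<mu> = - s / \<sigma> \<delta>"
  shows "h (c + scale \<mu> c' + scale r w) (c + scale \<mu> c' + scale r w) = 0"
    and "h (c + scale \<mu> c' + scale r w) c = \<mu> * \<sigma> \<delta>"
    and "h (c + scale \<mu> c' + scale r w) c' = \<delta>"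
proof -
  have 1: "h c' c = \<sigma> \<delta>" "h c w = 0" "h c' w = 0"
    using assms h_sym h_sym0 by metis+
  have sd: "\<sigma> \<delta> \<noteq> 0" using assms(4) by simp
  have "h (c + scale \<mu> c' + scale r w) (c + scale \<mu> c' + scale r w)
      = \<sigma> \<mu> * \<delta> + \<mu> * \<sigma> \<delta> + r * \<sigma> r * \<omega>"
    using assms(1,2,3,5,6,7) 1 by (simp add: algebra_simps)
  also have "\<sigma> \<mu> * \<delta> = - \<sigma> s" using assms(4,10) by simp
  also have "\<mu> * \<sigma> \<delta> = - s" using assms(10) sd by simp
  finally show "h (c + scale \<mu> c' + scale r w) (c + scale \<mu> c' + scale r w) = 0"
    using assms(8,9) by (simp add: algebra_simps)
  show "h (c + scale \<mu> c' + scale r w) c = \<mu> * \<sigma> \<delta>" using assms 1 by simp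
  show "h (c + scale \<mu> c' + scale r w) c' = \<delta>" using assms 1 by simp
qed

end

context herm2 begin

lemma anis:
  assumes C: "finite C" "card C \<le> n + 2" and inC: "a \<in> C" "b \<in> C" "c \<in> C" "c' \<in> C"
    and h: "h a a = 0" "h c c = 0" "h a c = 0" "h c b = 0" "h a b \<noteq> 0" "h c c' \<noteq> 0"
  shows "\<exists>w. (\<forall>y\<in>C. h w y = 0) \<and> h w w \<noteq> 0"
proof (rule ccontr)
  assume na: "\<not> ?thesis"
  obtain E where E: "finite E" "independent E" "card E = 2*n+1" using big by blast
  obtain T where T: "T \<subseteq> span E" "\<forall>y\<in>T. \<forall>c\<in>C. h y c = 0" "independent T" "finite T"
      "card E \<le> card T + card C"
    using kerC[OF C(1) E(1,2)] by blast
  have Tn: "card T \<ge> n - 1" using T(5) E(3) C(2) by linarith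
  have spC: "\<forall>y\<in>span T. \<forall>x\<in>C. h y x = 0" using T(2) orth_span by blast
  have iso: "\<forall>y\<in>span T. h y y = 0" using na spC by blast
  have pw: "\<forall>x\<in>span T. \<forall>y\<in>span T. h x y = 0"
  proof (intro ballI)
    fix x y assume xy: "x \<in> span T" "y \<in> span T"
    show "h x y = 0"
    proof (rule polar)
      show "h x x = 0" "h y y = 0" using iso xy by auto
      fix k show "h (x + scale k y) (x + scale k y) = 0"
        using iso xy by (meson span_add span_scale)
    qed
  qed
  have cT: "c \<notin> span T" using not_in_span_pair[of T c' c] spC inC h(6) span_base by blast
  have aT: "a \<notin> span (insert c T)"
  proof
    assume "a \<in> span (insert c T)"
    then obtain k where k: "a - scale k c \<in> span T" using span_breakdown_eq by blast
    have "h (a - scale k c) b = 0" using spC k inC by blast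
    then show False using h(4,5) by simp
  qed
  have ind: "independent (insert a (insert c T))"
    using T(3) cT aT by (simp add: independent_insertI)
  have ac: "h c a = 0" using h(3) h_sym0 by blast
  have Ta: "\<forall>y\<in>T. h y a = 0 \<and> h y c = 0 \<and> h a y = 0 \<and> h c y = 0"
    using T(2) inC h_sym0 by blast
  have pw2: "\<forall>x\<in>insert a (insert c T). \<forall>y\<in>insert a (insert c T). h x y = 0"
    using pw Ta h(1,2,3) ac span_base by blast
  have "card (insert a (insert c T)) \<le> n" using bound[OF ind pw2] by blast
  moreover have "card (insert a (insert c T)) = card T + 2"
  proof -
    have "c \<notin> T" using cT span_base by blast
    moreover have "a \<notin> insert c T" using aT span_base by blast
    ultimately show ?thesis using T(4) by simp
  qed
  ultimately show False using Tn n2 by linarith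
qed

end

context herm3 begin

lemma step:
  assumes BY: "finite BY" "independent BY" "\<forall>x\<in>BY. \<forall>y\<in>BY. h x y = 0"
    and ab: "h a a = 0" "h b b = 0" "h a b \<noteq> 0" "\<forall>y\<in>BY. h y a = 0 \<and> h y b = 0"
    and Fa: "FF (span (insert a (span BY)))" and Fb: "FF (span (insert b (span BY)))"
  shows "FF (span BY)"
  unfolding FF_def
proof (intro ballI impI)
  fix M assume M: "M \<in> Sk scale h n" "span BY \<subseteq> M"
  obtain BM where BM: "finite BM" "independent BM" "card BM = n" "span BM = M" "subspace M" "tot_iso h M"
    using Sk_D[OF M(1)] by blast
  have Mtot: "\<forall>x\<in>M. \<forall>y\<in>M. h x y = 0" using BM(6) unfolding tot_iso_def by blast
  define K where "K = {y\<in>M. h y a = 0 \<and> h y b = 0}"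
  have BYK: "BY \<subseteq> K" using M(2) span_superset[of BY] ab(4) unfolding K_def by blast
  obtain B where B: "BY \<subseteq> B" "B \<subseteq> K" "independent B" "K \<subseteq> span B"
    by (rule maximal_independent_subset_extend[OF BYK BY(2)])
  have BM': "B \<subseteq> span BM" using B(2) BM(4) unfolding K_def by blast
  have fB: "finite B" using independent_span_bound[OF BM(1) B(3) BM'] by blast
  have BsubM: "B \<subseteq> M" using B(2) unfolding K_def by blast
  have BMsub: "span B \<subseteq> M" using span_minimal[OF BsubM BM(5)] .
  have Bab: "\<forall>y\<in>B. h y a = 0 \<and> h y b = 0" using B(2) unfolding K_def by blast
  have Btot: "\<forall>x\<in>B. \<forall>y\<in>B. h x y = 0" using BsubM Mtot by blast
  have ba: "h b a \<noteq> 0" using ab(3) h_sym0 by blast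
  have anB: "a \<notin> span B" using not_in_span_pair[of B b a] Bab ab(3) by blast
  have cardB1: "card B \<le> n - 1"
  proof -
    have ind: "independent (insert a B)" using B(3) anB by (simp add: independent_insertI)
    have tot: "\<forall>x\<in>insert a B. \<forall>y\<in>insert a B. h x y = 0" using Btot Bab ab(1) h_sym0 by blast
    have "card (insert a B) \<le> n" using bound[OF ind tot] by blast
    moreover have "a \<notin> B" using anB span_base by blast
    ultimately show ?thesis using fB by simp
  qed
  have perp_out: "\<exists>x\<in>M. (\<forall>g\<in>G. h x g = 0) \<and> x \<notin> span B"
    if G: "finite G" "card G + card B < n" for G
  proof -
    obtain T1 where T1: "T1 \<subseteq> span BM" "\<forall>y\<in>T1. \<forall>c\<in>G. h y c = 0" "independent T1" "finite T1"
      "card BM \<le> card T1 + card G"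
      using kerC[OF G(1) BM(1,2)] by blast
    show ?thesis
    proof (rule ccontr)
      assume "\<not> ?thesis"
      then have "T1 \<subseteq> span B" using T1(1,2) BM(4) by blast
      then have "card T1 \<le> card B" using independent_span_bound[OF fB T1(3)] by blast
      then show False using T1(5) BM(3) G(2) by linarith
    qed
  qed
  have cardB2: "card B \<ge> n - 2"
  proof (rule ccontr)
    assume "\<not> ?thesis"
    then have "card {a, b} + card B < n" using n2 by (cases "a = b") (auto simp: card_insert_if)
    then obtain x where x: "x \<in> M" "\<forall>g\<in>{a,b}. h x g = 0" "x \<notin> span B"
      using perp_out[of "{a,b}"] by blast
    then have "x \<in> K" unfolding K_def by blast
    then show False using x(3) B(4) by blast
  qed
  have YB: "span BY \<subseteq> span B" using B(1) span_mono by blast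
  consider "card B = n - 1" | "card B = n - 2" using cardB1 cardB2 by linarith
  then show "M \<in> S"
  proof cases
    case 1
    have "FF (span B)" by (rule Lline[OF fB B(3) 1 Btot ab(1,2,3) Bab YB Fa Fb])
    then show ?thesis using M(1) BMsub unfolding FF_def by blast
  next
    case 2
    have cs: "card {a} + card B < n" "card {b} + card B < n" using 2 n2 by simp_all
    obtain xa where xa: "xa \<in> M" "h xa a = 0" "xa \<notin> span B"
      using perp_out[of "{a}", OF _ cs(1)] by auto
    obtain xb where xb: "xb \<in> M" "h xb b = 0" "xb \<notin> span B"
      using perp_out[of "{b}", OF _ cs(2)] by auto
    have xab: "h xa b \<noteq> 0"
    proof
      assume "h xa b = 0" then have "xa \<in> K" using xa unfolding K_def by blast
      then show False using xa(3) B(4) by blast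
    qed
    have xba: "h xb a \<noteq> 0"
    proof
      assume "h xb a = 0" then have "xb \<in> K" using xb unfolding K_def by blast
      then show False using xb(3) B(4) by blast
    qed
    define \<alpha> where "\<alpha> = h xa b / h a b"
    define \<beta> where "\<beta> = h xb a / h b a"
    have \<alpha>0: "\<alpha> \<noteq> 0" and \<beta>0: "\<beta> \<noteq> 0" using xab xba ab(3) ba unfolding \<alpha>_def \<beta>_def by auto
    have \<alpha>e: "\<alpha> * h a b = h xa b" unfolding \<alpha>_def using ab(3) by simp
    have \<beta>e: "\<beta> * h b a = h xb a" unfolding \<beta>_def using ba by simp
    define c where "c = xa - scale \<alpha> a"
    define c' where "c' = xb - scale \<beta> b"
    have xac: "xa = c + scale \<alpha> a" unfolding c_def by simp
    have xbc: "xb = c' + scale \<beta> b" unfolding c'_def by simp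
    have hxaxa: "h xa xa = 0" "h xb xb = 0" "h xa xb = 0" "h xb xa = 0" using Mtot xa xb by blast+
    have haxa: "h a xa = 0" "h b xb = 0" using xa(2) xb(2) h_sym0 by blast+
    have hca: "h c a = 0" "h c b = 0" "h c' a = 0" "h c' b = 0"
      unfolding c_def c'_def using xa(2) xb(2) ab(1,2) \<alpha>e \<beta>e by simp_all
    have hcc: "h c c = 0" "h c' c' = 0"
      unfolding c_def c'_def using hxaxa haxa xa(2) xb(2) ab(1,2) by simp_all
    have hax: "h a xb = \<sigma> \<beta> * h a b"
    proof -
      have "h a xb = \<sigma> (h xb a)" by (rule h_sym)
      also have "\<dots> = \<sigma> \<beta> * \<sigma> (h b a)" using \<beta>e[symmetric] by simp
      also have "\<sigma> (h b a) = h a b" using h_sym by metis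
      finally show ?thesis .
    qed
    define \<delta> where "\<delta> = h c c'"
    have \<delta>e: "\<delta> = - (\<alpha> * \<sigma> \<beta> * h a b)"
    proof -
      have "\<delta> = h xa xb - \<sigma> \<beta> * h xa b - \<alpha> * h a xb + \<alpha> * (\<sigma> \<beta> * h a b)"
        unfolding \<delta>_def c_def c'_def by (simp add: algebra_simps)
      also have "\<dots> = - (\<alpha> * \<sigma> \<beta> * h a b)"
        using hxaxa(3) hax \<alpha>e[symmetric] by (simp add: algebra_simps)
      finally show ?thesis .
    qed
    have \<delta>0: "\<delta> \<noteq> 0" using \<delta>e \<alpha>0 \<beta>0 ab(3) by simp
    have Bc: "\<forall>y\<in>B. h y c = 0 \<and> h y c' = 0"
    proof
      fix y assume y: "y \<in> B"
      then have "h y xa = 0" "h y xb = 0" using BsubM xa(1) xb(1) Mtot by blast+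
      then show "h y c = 0 \<and> h y c' = 0" using Bab y unfolding c_def c'_def by simp
    qed
    define C where "C = B \<union> {a, b, c, c'}"
    have fC: "finite C" using fB unfolding C_def by simp
    have cC: "card C \<le> n + 2"
    proof -
      have "card C \<le> card B + card {a, b, c, c'}" unfolding C_def by (rule card_Un_le)
      also have "card {a, b, c, c'} \<le> 4" by (simp add: card_insert_if)
      finally show ?thesis using 2 n2 by linarith
    qed
    have hac: "h a c = 0" using hca(1) h_sym0 by blast
    obtain w where w: "\<forall>y\<in>C. h w y = 0" "h w w \<noteq> 0"
      using anis[OF fC cC _ _ _ _ ab(1) hcc(1) hac hca(2) ab(3)] \<delta>0 unfolding C_def \<delta>_def by blast
    have hw: "h w a = 0" "h w b = 0" "h w c = 0" "h w c' = 0" "\<forall>y\<in>B. h y w = 0"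
      using w(1) h_sym0 unfolding C_def by blast+
    define \<omega> where "\<omega> = h w w"
    obtain s where s: "s + \<sigma> s = \<omega>" using trace_surj[of \<omega>] h_self_fix unfolding \<omega>_def by blast
    have s0: "s \<noteq> 0" using s w(2) unfolding \<omega>_def by auto
    define lam where "lam = \<sigma> (s / \<delta>)"
    define \<mu> where "\<mu> = - s / \<sigma> \<delta>"
    have \<mu>0: "\<mu> * \<sigma> \<delta> \<noteq> 0" unfolding \<mu>_def using s0 \<delta>0 by simp
    obtain \<rho> where \<rho>: "\<rho> * \<sigma> \<rho> = 1" "\<rho> \<noteq> 1" using norm1 by blast
    define x where "x = xa + scale lam xb"
    have xM: "x \<in> M" unfolding x_def using xa(1) xb(1) BM(5) by (simp add: subspace_add subspace_scale)
    have hxb: "h x b \<noteq> 0" unfolding x_def using xab xb(2) by simp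
    define z where "z r = c + scale \<mu> c' + scale r w" for r
    have zp: "h (z r) (z r) = 0 \<and> h (z r) c = \<mu> * \<sigma> \<delta> \<and> h (z r) c' = \<delta> \<and> h (z r) a = 0 \<and> h (z r) b = 0
       \<and> (\<forall>y\<in>B. h y (z r) = 0) \<and> h (z r) x = 0" if r: "r * \<sigma> r = 1" for r
    proof -
      have z1: "h (z r) (z r) = 0" "h (z r) c = \<mu> * \<sigma> \<delta>" "h (z r) c' = \<delta>"
        using zcalc[OF hcc \<delta>_def[symmetric] \<delta>0 hw(3,4) \<omega>_def[symmetric] s r \<mu>_def] unfolding z_def by auto
      have z2: "h (z r) a = 0" "h (z r) b = 0" unfolding z_def using hca hw by simp_all
      have z3: "\<forall>y\<in>B. h y (z r) = 0" unfolding z_def using Bc hw(5) by simp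
      have "h (z r) x = h (z r) c + \<sigma> \<alpha> * h (z r) a + \<sigma> lam * (h (z r) c' + \<sigma> \<beta> * h (z r) b)"
        unfolding x_def xac xbc by simp
      also have "\<dots> = \<mu> * \<sigma> \<delta> + \<sigma> lam * \<delta>" using z1 z2 by simp
      also have "\<dots> = 0" unfolding \<mu>_def lam_def using \<delta>0 by simp
      finally show ?thesis using z1 z2 z3 by blast
    qed
    have xnB: "x \<notin> span B" using not_in_span_pair[of B b x] Bab hxb by blast
    have xnB': "x \<notin> B" using xnB span_base by blast
    have indX: "independent (insert x B)" using B(3) xnB by (simp add: independent_insertI)
    have cardX: "card (insert x B) = n - 1" using fB xnB' 2 n2 by simp
    have xtot: "h x x = 0" "\<forall>y\<in>B. h x y = 0 \<and> h y x = 0" using Mtot xM BsubM by blast+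
    have totX: "\<forall>u\<in>insert x B. \<forall>v\<in>insert x B. h u v = 0" using xtot Btot by blast
    have XSk: "span (insert x B) \<in> Sk scale h (n - 1)" using mkSk[OF _ indX cardX totX] fB by simp
    have XM: "span (insert x B) \<subseteq> M" using span_minimal[of "insert x B" M] xM BsubM BM(5) by blast
    have znot: "z r \<notin> span (insert x B)" if r: "r * \<sigma> r = 1" for r
    proof
      assume "z r \<in> span (insert x B)"
      then obtain k where k: "z r - scale k x \<in> span B" using span_breakdown_eq by blast
      have "h (z r - scale k x) b = 0" using orth_span[of B b] Bab k by blast
      then have "k * h x b = 0" using zp[OF r] by simp
      then have "k = 0" using hxb by simp
      then have "z r \<in> span B" using k by simp
      moreover have "\<forall>y\<in>B. h y c = 0" using Bc by blast
      ultimately have "h (z r) c = 0" using orth_span by blast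
      then show False using zp[OF r] \<mu>0 by simp
    qed
    have PS: "span (insert (z r) (insert x B)) \<in> Sk scale h n \<and> span (insert (z r) (insert x B)) \<in> S"
      if r: "r * \<sigma> r = 1" for r
    proof -
      have zn: "z r \<notin> span (insert x B)" by (rule znot[OF r])
      have zn': "z r \<notin> insert x B" using zn span_base by blast
      have znB: "z r \<notin> span B" using zn span_mono[of B "insert x B"] by blast
      have ind: "independent (insert (z r) (insert x B))" using indX zn by (simp add: independent_insertI)
      have card: "card (insert (z r) (insert x B)) = n" using cardX zn' fB n2 by simp
      have zz: "h (z r) (z r) = 0" "h (z r) x = 0" "h x (z r) = 0" "\<forall>y\<in>B. h y (z r) = 0 \<and> h (z r) y = 0"
        using zp[OF r] h_sym0 by blast+
      have tot: "\<forall>u\<in>insert (z r) (insert x B). \<forall>v\<in>insert (z r) (insert x B). h u v = 0"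
        using totX zz by blast
      have PSk: "span (insert (z r) (insert x B)) \<in> Sk scale h n" using mkSk[OF _ ind card tot] fB by simp
      have ind': "independent (insert (z r) B)" using B(3) znB by (simp add: independent_insertI)
      have "z r \<notin> B" using znB span_base[of "z r" B] by blast
      then have card': "card (insert (z r) B) = n - 1" using fB 2 n2 by simp
      have tot': "\<forall>u\<in>insert (z r) B. \<forall>v\<in>insert (z r) B. h u v = 0" using Btot zz by blast
      have ab': "\<forall>y\<in>insert (z r) B. h y a = 0 \<and> h y b = 0" using Bab zp[OF r] by blast
      have YB': "span BY \<subseteq> span (insert (z r) B)" using YB span_mono[of B "insert (z r) B"] by blast
      have "FF (span (insert (z r) B))"
        by (rule Lline[OF _ ind' card' tot' ab(1,2,3) ab' YB' Fa Fb]) (use fB in simp)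
      moreover have "span (insert (z r) B) \<subseteq> span (insert (z r) (insert x B))"
        by (rule span_mono) blast
      ultimately show ?thesis using PSk unfolding FF_def by blast
    qed
    have r1: "1 * \<sigma> 1 = (1::'a)" by simp
    have ne: "span (insert (z 1) (insert x B)) \<noteq> span (insert (z \<rho>) (insert x B))"
    proof
      assume eq: "span (insert (z 1) (insert x B)) = span (insert (z \<rho>) (insert x B))"
      define P where "P = span (insert (z 1) (insert x B))"
      have "z \<rho> \<in> P" unfolding P_def eq by (rule span_base) simp
      moreover have "z 1 \<in> P" unfolding P_def by (rule span_base) simp
      ultimately have "z \<rho> - z 1 \<in> P" unfolding P_def by (rule span_diff)
      moreover have "z \<rho> - z 1 = scale (\<rho> - 1) w" unfolding z_def by (simp add: scale_left_diff_distrib)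
      ultimately have "scale (inverse (\<rho> - 1)) (scale (\<rho> - 1) w) \<in> P" unfolding P_def by (metis span_scale)
      then have "w \<in> P" using \<rho>(2) by simp
      then obtain k where k: "w - scale k (z 1) \<in> span (insert x B)" unfolding P_def using span_breakdown_eq by blast
      then obtain j where j: "w - scale k (z 1) - scale j x \<in> span B" using span_breakdown_eq by blast
      have hb: "h (w - scale k (z 1) - scale j x) b = 0" using orth_span[of B b] Bab j by blast
      then have "j * h x b = 0" using zp[OF r1] hw by simp
      then have j0: "j = 0" using hxb by simp
      have "\<forall>y\<in>B. h y c = 0" using Bc by blast
      then have "h (w - scale k (z 1) - scale j x) c = 0" using orth_span j by blast
      then have "k * (\<mu> * \<sigma> \<delta>) = 0" using zp[OF r1] hw j0 by simp
      then have "k = 0" using \<mu>0 by simp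
      then have "w \<in> span B" using j j0 by simp
      then have "h w w = 0" using orth_span[of B w] hw(5) by blast
      then show False using w(2) by simp
    qed
    have "FF (span (insert x B))"
      by (rule line_lemma[OF XSk conjunct1[OF PS[OF r1]] conjunct1[OF PS[OF \<rho>(1)]] ne _ _
            conjunct2[OF PS[OF r1]] conjunct2[OF PS[OF \<rho>(1)]]]) (auto intro!: span_mono)
    then show ?thesis using M(1) XM unfolding FF_def by blast
  qed
qed

end



context herm begin
lemma span_insert_span: "span (insert a (span S)) = span (insert a S)"
proof
  have "insert a (span S) \<subseteq> span (insert a S)"
    using span_mono[of S "insert a S"] span_base[of a "insert a S"] by blast
  then show "span (insert a (span S)) \<subseteq> span (insert a S)" by (metis span_mono span_span)
  have "insert a S \<subseteq> insert a (span S)" using span_superset by blast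
  then show "span (insert a S) \<subseteq> span (insert a (span S))" by (rule span_mono)
qed
end

context herm3 begin

lemma frame_all:
  assumes fr: "is_frame scale h n p p'" and G: "frame_subspaces scale n p p' \<subseteq> S"
  shows "Sk scale h n \<subseteq> S"
proof -
  have totP: "tot_iso h (span (p ` {..<n}))" and totP': "tot_iso h (span (p' ` {..<n}))"
    and hpp': "\<forall>i<n. \<forall>j<n. h (p i) (p' j) = 0 \<longleftrightarrow> i \<noteq> j"
    using fr unfolding is_frame_def Let_def by blast+
  have pp: "\<forall>i<n. \<forall>j<n. h (p i) (p j) = 0"
    using totP span_base unfolding tot_iso_def by (metis imageI lessThan_iff)
  have pp': "\<forall>i<n. \<forall>j<n. h (p' i) (p' j) = 0"
    using totP' span_base unfolding tot_iso_def by (metis imageI lessThan_iff)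
  have p'p: "\<forall>i<n. \<forall>j<n. h (p' i) (p j) = 0 \<longleftrightarrow> i \<noteq> j"
    using hpp' h_sym0 by metis
  define xc where "xc c i = (if c i then p i else p' i)" for c :: "nat \<Rightarrow> bool" and i
  define pc where "pc c i = (if c i then p' i else p i)" for c :: "nat \<Rightarrow> bool" and i
  have dual: "\<forall>i\<in>I. \<forall>j\<in>I. (h (xc c i) (pc c j) = 0 \<longleftrightarrow> i \<noteq> j)" if "I \<subseteq> {..<n}" for c I
  proof (intro ballI)
    fix i j assume "i \<in> I" "j \<in> I"
    then have "i < n" "j < n" using that by auto
    then show "(h (xc c i) (pc c j) = 0 \<longleftrightarrow> i \<noteq> j)"
      using hpp' pp pp' p'p unfolding xc_def pc_def by auto
  qed
  have indep: "independent (xc c ` I) \<and> inj_on (xc c) I" if "I \<subseteq> {..<n}" for c I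
    by (rule dual_family[OF dual[OF that]])
  have tot: "\<forall>u\<in>xc c ` I. \<forall>v\<in>xc c ` I. h u v = 0" if "I \<subseteq> {..<n}" for c I
  proof (intro ballI)
    fix u v assume "u \<in> xc c ` I" "v \<in> xc c ` I"
    then obtain i j where ij: "i \<in> I" "j \<in> I" "u = xc c i" "v = xc c j" by blast
    then have "i < n" "j < n" using that by auto
    then show "h u v = 0"
      using hpp' pp pp' p'p ij unfolding xc_def by (cases "c i"; cases "c j"; cases "i = j") auto
  qed
  have claim: "\<forall>c. FF (span (xc c ` {..<n - k}))" if "k \<le> n" for k
    using that proof (induction k)
    case 0
    show ?case
    proof
      fix c
      define BY where "BY = xc c ` {..<n}"
      have iBY: "independent BY" and inj: "inj_on (xc c) {..<n}" using indep[of "{..<n}" c] BY_def by auto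
      have fBY: "finite BY" "card BY = n" using inj card_image[of "xc c" "{..<n}"] BY_def by auto
      have tBY: "\<forall>u\<in>BY. \<forall>v\<in>BY. h u v = 0" using tot[of "{..<n}" c] BY_def by auto
      have inS: "span BY \<in> S" using G unfolding frame_subspaces_def BY_def xc_def by blast
      show "FF (span (xc c ` {..<n - 0}))" unfolding FF_def
      proof (intro ballI impI)
        fix M assume M: "M \<in> Sk scale h n" "span (xc c ` {..<n - 0}) \<subseteq> M"
        then have YM: "span BY \<subseteq> M" using BY_def by simp
        have BM: "tot_iso h M" "subspace M" using M(1) unfolding Sk_def by blast+
        have "M \<subseteq> span BY"
        proof
          fix y assume y: "y \<in> M"
          show "y \<in> span BY"
          proof (rule ccontr)
            assume yn: "y \<notin> span BY"
            have ind: "independent (insert y BY)" using iBY yn by (simp add: independent_insertI)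
            have "insert y BY \<subseteq> M" using y YM span_superset by blast
            then have "\<forall>u\<in>insert y BY. \<forall>v\<in>insert y BY. h u v = 0" using BM(1) unfolding tot_iso_def by blast
            then have "card (insert y BY) \<le> n" using bound[OF ind] by blast
            moreover have "y \<notin> BY" using yn span_base by blast
            ultimately show False using fBY by simp
          qed
        qed
        then have "M = span BY" using YM by blast
        then show "M \<in> S" using inS by simp
      qed
    qed
  next
    case (Suc k)
    define j where "j = n - Suc k"
    have jn: "j < n" and jk: "n - k = Suc j" using Suc.prems unfolding j_def by auto
    have IH: "\<forall>c. FF (span (xc c ` {..<Suc j}))" using Suc jk by simp
    show ?case
    proof
      fix c
      define BY where "BY = xc c ` {..<j}"
      have sub: "{..<j} \<subseteq> {..<n}" using jn by auto
      have iBY: "independent BY" using indep[OF sub, of c] BY_def by auto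
      have fBY: "finite BY" using BY_def by simp
      have tBY: "\<forall>u\<in>BY. \<forall>v\<in>BY. h u v = 0" using tot[OF sub, of c] BY_def by auto
      have ab: "h (p j) (p j) = 0" "h (p' j) (p' j) = 0" "h (p j) (p' j) \<noteq> 0"
        using pp pp' hpp' jn by auto
      have perp: "\<forall>y\<in>BY. h y (p j) = 0 \<and> h y (p' j) = 0"
        using pp pp' hpp' p'p jn unfolding BY_def xc_def by auto
      have ins: "insert (p j) BY = xc (c(j := True)) ` {..<Suc j}"
                "insert (p' j) BY = xc (c(j := False)) ` {..<Suc j}"
        unfolding BY_def xc_def lessThan_Suc by auto
      have Fa: "FF (span (insert (p j) (span BY)))"
        unfolding span_insert_span ins(1) using IH by blast
      have Fb: "FF (span (insert (p' j) (span BY)))"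
        unfolding span_insert_span ins(2) using IH by blast
      have "FF (span BY)" by (rule step[OF fBY iBY tBY ab perp Fa Fb])
      then show "FF (span (xc c ` {..<n - Suc k}))" unfolding BY_def j_def .
    qed
  qed
  have "FF (span (xc (\<lambda>_. True) ` {..<n - n}))" using claim[of n] by blast
  then have "FF {0}" by simp
  show ?thesis
  proof
    fix M assume M: "M \<in> Sk scale h n"
    then have "subspace M" unfolding Sk_def by blast
    then have "{0} \<subseteq> M" using subspace_0 by blast
    then show "M \<in> S" using \<open>FF {0}\<close> M unfolding FF_def by blast
  qed
qed

end


context herm2 begin
lemma frame_Sk:
  assumes fr: "is_frame scale h n p p'"
  shows "frame_subspaces scale n p p' \<subseteq> Sk scale h n"
proof -
  have totP: "tot_iso h (span (p ` {..<n}))" and totP': "tot_iso h (span (p' ` {..<n}))"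
    and hpp': "\<forall>i<n. \<forall>j<n. h (p i) (p' j) = 0 \<longleftrightarrow> i \<noteq> j"
    using fr unfolding is_frame_def Let_def by blast+
  have pp: "\<forall>i<n. \<forall>j<n. h (p i) (p j) = 0"
    using totP span_base unfolding tot_iso_def by (metis imageI lessThan_iff)
  have pp': "\<forall>i<n. \<forall>j<n. h (p' i) (p' j) = 0"
    using totP' span_base unfolding tot_iso_def by (metis imageI lessThan_iff)
  have p'p: "\<forall>i<n. \<forall>j<n. h (p' i) (p j) = 0 \<longleftrightarrow> i \<noteq> j"
    using hpp' h_sym0 by metis
  show ?thesis
  proof
    fix Z assume "Z \<in> frame_subspaces scale n p p'"
    then obtain c where Z: "Z = span ((\<lambda>i. if c i then p i else p' i) ` {..<n})"
      unfolding frame_subspaces_def by blast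
    define xc where "xc i = (if c i then p i else p' i)" for i
    define pc where "pc i = (if c i then p' i else p i)" for i
    have dual: "\<forall>i\<in>{..<n}. \<forall>j\<in>{..<n}. (h (xc i) (pc j) = 0 \<longleftrightarrow> i \<noteq> j)"
      using hpp' pp pp' p'p unfolding xc_def pc_def by auto
    have ind: "independent (xc ` {..<n}) \<and> inj_on xc {..<n}" by (rule dual_family[OF dual])
    have tot: "\<forall>u\<in>xc ` {..<n}. \<forall>v\<in>xc ` {..<n}. h u v = 0"
    proof (intro ballI)
      fix u v assume "u \<in> xc ` {..<n}" "v \<in> xc ` {..<n}"
      then obtain i j where ij: "i < n" "j < n" "u = xc i" "v = xc j" by blast
      then show "h u v = 0"
        using hpp' pp pp' p'p ij unfolding xc_def by (cases "c i"; cases "c j"; cases "i = j") auto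
    qed
    have card: "card (xc ` {..<n}) = n" using ind card_image[of xc "{..<n}"] by simp
    have "span (xc ` {..<n}) \<in> Sk scale h n" using mkSk[OF _ conjunct1[OF ind] card tot] by simp
    then show "Z \<in> Sk scale h n" unfolding Z xc_def .
  qed
qed
end

theorem mainTheorem3:
  fixes scale :: "'k::field \<Rightarrow> 'v::ab_group_add \<Rightarrow> 'v"
    and \<sigma> :: "'k \<Rightarrow> 'k"
    and h :: "'v \<Rightarrow> 'v \<Rightarrow> 'k"
    and n :: nat
    and p p' :: "nat \<Rightarrow> 'v"
  assumes "vector_space scale"
    and "inv_field_aut \<sigma>"
    and "sigma_hermitian scale \<sigma> h"
    and "nondegenerate h"
    and "witt_index scale h n"
    and "n \<ge> 2"
    and "positive_defect scale h n"
    and "is_frame scale h n p p'"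
  shows "generates (dual_points scale h n) (dual_lines scale h n) (frame_subspaces scale n p p')"
proof -
  interpret herm2 scale \<sigma> h n
    using assms by (intro herm2.intro herm.intro herm_axioms.intro herm2_axioms.intro) simp_all
  let ?P = "Sk scale h n" and ?L = "dual_lines scale h n" and ?G = "frame_subspaces scale n p p'"
  have G: "?G \<subseteq> ?P" by (rule frame_Sk[OF assms(8)])
  have PP: "geom_subspace ?P ?L ?P" unfolding geom_subspace_def dual_lines_def by blast
  have "\<Inter> {S. geom_subspace ?P ?L S \<and> ?G \<subseteq> S} = ?P"
  proof
    show "\<Inter> {S. geom_subspace ?P ?L S \<and> ?G \<subseteq> S} \<subseteq> ?P" using PP G by blast
    show "?P \<subseteq> \<Inter> {S. geom_subspace ?P ?L S \<and> ?G \<subseteq> S}"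
    proof (rule Inter_greatest)
      fix S assume S: "S \<in> {S. geom_subspace ?P ?L S \<and> ?G \<subseteq> S}"
      interpret herm3 scale \<sigma> h n S
        using S by unfold_locales simp
      show "?P \<subseteq> S" using frame_all[OF assms(8)] S by blast
    qed
  qed
  then show ?thesis unfolding generates_def dual_points_def .
qed



end
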